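(* Let $n>d\ge1$ and let $G$ be a connected graph with $n$ vertices and diameter $d$. Then $$\sigma_2(G)\ge g_2(d)+(n-1-d)\left\lceil\tfrac d2\right\rceil\left(\left\lceil\tfrac d2\right\rceil+1\right).$$ Equality holds for the tree consisting of a path $P$ of length $d$ plus $n-d-1$ leaves all adjacent to one vertex of $P$ of eccentricity $\lceil d/2\rceil$.
   Context: All graphs are finite, simple, undirected. For a connected graph $G$ and $u\in V(G)$, the eccentricity $\varepsilon_G(u)=\max_{v\in V(G)} d_G(u,v)$; the diameter is $\max_u\varepsilon_G(u)$. $\sigma_2(G)=\sum_{uv\in E(G)}\varepsilon_G(u)\varepsilon_G(v)$. Here $g_2(d)=\sum_{i=0}^{d-1}\max\{i,d-i\}\cdot\max\{i+1,d-i-1\}$ (the value of $\sigma_2$ on the path with $d$ edges), which equals $\frac{7d^3-4d}{12}$ for even $d$ and $\frac{7d^3-d+6}{12}$ for odd $d$. *)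

theory Defs
  imports Complex_Main
begin

definition simple_graph :: "'a set \<Rightarrow> ('a \<Rightarrow> 'a \<Rightarrow> bool) \<Rightarrow> bool" where
  "simple_graph V E \<longleftrightarrow> finite V \<and> (\<forall>u v. E u v \<longrightarrow> u \<in> V \<and> v \<in> V)
     \<and> (\<forall>u v. E u v \<longrightarrow> E v u) \<and> (\<forall>u. \<not> E u u)"

fun walk :: "('a \<Rightarrow> 'a \<Rightarrow> bool) \<Rightarrow> 'a list \<Rightarrow> bool" where
  "walk E [] = False"
| "walk E [x] = True"
| "walk E (x # y # xs) = (E x y \<and> walk E (y # xs))"

definition joined :: "('a \<Rightarrow> 'a \<Rightarrow> bool) \<Rightarrow> 'a \<Rightarrow> 'a \<Rightarrow> nat \<Rightarrow> bool" where
  "joined E u v k \<longleftrightarrow> (\<exists>xs. walk E xs \<and> hd xs = u \<and> last xs = v \<and> length xs = Suc k)"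

definition connected_graph :: "'a set \<Rightarrow> ('a \<Rightarrow> 'a \<Rightarrow> bool) \<Rightarrow> bool" where
  "connected_graph V E \<longleftrightarrow> simple_graph V E \<and> V \<noteq> {} \<and>
     (\<forall>u\<in>V. \<forall>v\<in>V. \<exists>k. joined E u v k)"

definition gdist :: "('a \<Rightarrow> 'a \<Rightarrow> bool) \<Rightarrow> 'a \<Rightarrow> 'a \<Rightarrow> nat" where
  "gdist E u v = (LEAST k. joined E u v k)"

definition ecc :: "'a set \<Rightarrow> ('a \<Rightarrow> 'a \<Rightarrow> bool) \<Rightarrow> 'a \<Rightarrow> nat" where
  "ecc V E u = Max ((\<lambda>v. gdist E u v) ` V)"

definition diameter :: "'a set \<Rightarrow> ('a \<Rightarrow> 'a \<Rightarrow> bool) \<Rightarrow> nat" where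
  "diameter V E = Max ((\<lambda>u. ecc V E u) ` V)"

definition edges :: "'a set \<Rightarrow> ('a \<Rightarrow> 'a \<Rightarrow> bool) \<Rightarrow> 'a set set" where
  "edges V E = {{u, v} | u v. u \<in> V \<and> v \<in> V \<and> E u v}"

definition sigma2 :: "'a set \<Rightarrow> ('a \<Rightarrow> 'a \<Rightarrow> bool) \<Rightarrow> nat" where
  "sigma2 V E = (\<Sum>e\<in>edges V E. \<Prod>u\<in>e. ecc V E u)"

definition g2 :: "nat \<Rightarrow> nat" where
  "g2 d = (\<Sum>i<d. max i (d - i) * max (i + 1) (d - i - 1))"

text \<open>The extremal tree on vertices {0..<n}: path 0 - 1 - ... - d, plus leaves d+1, ..., n-1
  all adjacent to path vertex c = d div 2 (which has eccentricity ceil(d/2) on the path).\<close>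
definition ext_tree_edge :: "nat \<Rightarrow> nat \<Rightarrow> nat \<Rightarrow> nat \<Rightarrow> bool" where
  "ext_tree_edge n d u v \<longleftrightarrow> u < n \<and> v < n \<and>
     ((u \<le> d \<and> v \<le> d \<and> (v = u + 1 \<or> u = v + 1))
      \<or> (u = d div 2 \<and> d < v) \<or> (v = d div 2 \<and> d < u))"

end

theory Submission
  imports Defs
begin


lemma walk_iff: "walk E xs \<longleftrightarrow> xs \<noteq> [] \<and> (\<forall>i. Suc i < length xs \<longrightarrow> E (xs!i) (xs!Suc i))"
proof (induction E xs rule: walk.induct)
  case (3 E x y xs)
  show ?case
  proof
    assume "walk E (x # y # xs)"
    then have "E x y" "\<forall>i. Suc i < length (y#xs) \<longrightarrow> E ((y#xs)!i) ((y#xs)!Suc i)" using 3 by auto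
    then show "x # y # xs \<noteq> [] \<and> (\<forall>i. Suc i < length (x # y # xs) \<longrightarrow> E ((x # y # xs) ! i) ((x # y # xs) ! Suc i))"
      by (auto simp: nth_Cons split: nat.splits)
  next
    assume h: "x # y # xs \<noteq> [] \<and> (\<forall>i. Suc i < length (x # y # xs) \<longrightarrow> E ((x # y # xs) ! i) ((x # y # xs) ! Suc i))"
    then have "E x y" by (metis length_Cons nth_Cons_0 nth_Cons_Suc zero_less_Suc Suc_less_eq)
    moreover have "\<forall>i. Suc i < length (y#xs) \<longrightarrow> E ((y#xs)!i) ((y#xs)!Suc i)"
    proof (intro allI impI)
      fix i assume "Suc i < length (y#xs)"
      then have "E ((x # y # xs) ! Suc i) ((x # y # xs) ! Suc (Suc i))" using h by auto
      then show "E ((y#xs)!i) ((y#xs)!Suc i)" by simp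
    qed
    ultimately show "walk E (x # y # xs)" using 3 by simp
  qed
qed auto

lemma walk_append: "walk E xs \<Longrightarrow> walk E ys \<Longrightarrow> last xs = hd ys \<Longrightarrow> walk E (xs @ tl ys)"
proof (induction E xs rule: walk.induct)
  case (2 E x)
  then show ?case by (cases ys) auto
next
  case (3 E x y xs)
  then show ?case by auto
qed auto

lemma walk_rev: assumes "\<forall>u v. E u v \<longrightarrow> E v u" "walk E xs" shows "walk E (rev xs)"
proof -
  have ne: "xs \<noteq> []" and st: "\<forall>i. Suc i < length xs \<longrightarrow> E (xs!i) (xs!Suc i)" using assms(2) walk_iff by metis+
  have "\<forall>i. Suc i < length (rev xs) \<longrightarrow> E (rev xs!i) (rev xs!Suc i)"
  proof (intro allI impI)
    fix i assume i: "Suc i < length (rev xs)"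
    define j where "j = length xs - Suc (Suc i)"
    have j1: "Suc j < length xs" using i j_def by auto
    have "rev xs ! i = xs ! Suc j" using i by (simp add: rev_nth j_def Suc_diff_Suc)
    moreover have "rev xs ! Suc i = xs ! j" using i by (simp add: rev_nth j_def)
    ultimately show "E (rev xs!i) (rev xs!Suc i)" using st j1 assms(1) by metis
  qed
  then show ?thesis using ne walk_iff by (metis Nil_is_rev_conv)
qed

lemma walk_take: "walk E xs \<Longrightarrow> i < length xs \<Longrightarrow> walk E (take (Suc i) xs)"
  unfolding walk_iff by (auto simp: nth_take)

lemma walk_drop: "walk E xs \<Longrightarrow> i < length xs \<Longrightarrow> walk E (drop i xs)"
  unfolding walk_iff by (auto simp: nth_drop)

lemma joined_refl: "joined E u u 0"
  unfolding joined_def by (rule exI[of _ "[u]"]) auto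

lemma joined_edge: "E u v \<Longrightarrow> joined E u v 1"
  unfolding joined_def by (rule exI[of _ "[u,v]"]) auto

lemma joined_trans: assumes "joined E u v k" "joined E v w l" shows "joined E u w (k + l)"
proof -
  obtain xs where xs: "walk E xs" "hd xs = u" "last xs = v" "length xs = Suc k" using assms(1) joined_def by metis
  obtain ys where ys: "walk E ys" "hd ys = v" "last ys = w" "length ys = Suc l" using assms(2) joined_def by metis
  have w: "walk E (xs @ tl ys)" using walk_append xs ys by metis
  have "hd (xs @ tl ys) = u" using xs by (cases xs) auto
  moreover have "last (xs @ tl ys) = w"
  proof (cases "tl ys = []")
    case True
    then have "ys = [v]" using ys by (cases ys) auto
    then show ?thesis using xs ys True by auto
  next
    case False
    then show ?thesis using ys by (cases ys) auto
  qed
  moreover have "length (xs @ tl ys) = Suc (k + l)" using xs ys by auto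
  ultimately show ?thesis unfolding joined_def using w by blast
qed

lemma joined_sym: "\<forall>u v. E u v \<longrightarrow> E v u \<Longrightarrow> joined E u v k \<Longrightarrow> joined E v u k"
  unfolding joined_def by (metis walk_rev length_rev hd_rev last_rev)

lemma gdist_le: "joined E u v k \<Longrightarrow> gdist E u v \<le> k"
  unfolding gdist_def by (rule Least_le)

lemma gdist_joined: "joined E u v k \<Longrightarrow> joined E u v (gdist E u v)"
  unfolding gdist_def by (rule LeastI)

lemma gdist_lower:
  assumes "\<And>a b. E a b \<Longrightarrow> \<phi> b \<le> \<phi> a + 1" "joined E u v k"
  shows "\<phi> v \<le> \<phi> u + k"
proof -
  obtain xs where xs: "walk E xs" "hd xs = u" "last xs = v" "length xs = Suc k" using assms(2) joined_def by metis
  have "\<forall>i. i < length xs \<longrightarrow> \<phi> (xs!i) \<le> \<phi> (xs!0) + i"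
  proof (intro allI)
    fix i show "i < length xs \<longrightarrow> \<phi> (xs!i) \<le> \<phi> (xs!0) + i"
    proof (induction i)
      case (Suc i)
      show ?case
      proof
        assume "Suc i < length xs"
        then have "E (xs!i) (xs!Suc i)" using xs(1) walk_iff by metis
        then show "\<phi> (xs!Suc i) \<le> \<phi> (xs!0) + Suc i" using Suc assms(1) \<open>Suc i < length xs\<close> by fastforce
      qed
    qed auto
  qed
  then have "\<phi> (xs!k) \<le> \<phi> (xs!0) + k" using xs by auto
  moreover have "xs!k = v" using xs by (metis last_conv_nth list.size(3) nat.distinct(1) diff_Suc_1)
  moreover have "xs!0 = u" using xs by (metis hd_conv_nth list.size(3) nat.distinct(1))
  ultimately show ?thesis by simp
qed




locale cgraph =
  fixes V :: "'a set" and E :: "'a \<Rightarrow> 'a \<Rightarrow> bool"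
  assumes conn: "connected_graph V E"
begin

lemma fin: "finite V" and inV: "E u v \<Longrightarrow> u \<in> V \<and> v \<in> V" and sym: "\<forall>u v. E u v \<longrightarrow> E v u"
  and irr: "\<not> E u u" and ne: "V \<noteq> {}"
  using conn unfolding connected_graph_def simple_graph_def by auto

lemma ex_joined: "u \<in> V \<Longrightarrow> v \<in> V \<Longrightarrow> joined E u v (gdist E u v)"
  using conn unfolding connected_graph_def by (metis gdist_joined)

lemma gd_sym: "u \<in> V \<Longrightarrow> v \<in> V \<Longrightarrow> gdist E u v = gdist E v u"
  by (meson antisym ex_joined gdist_le joined_sym sym)

lemma gd_tri: "u \<in> V \<Longrightarrow> v \<in> V \<Longrightarrow> w \<in> V \<Longrightarrow> gdist E u w \<le> gdist E u v + gdist E v w"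
  by (meson ex_joined gdist_le joined_trans)

lemma gd_edge: "E u v \<Longrightarrow> gdist E u v \<le> 1"
  by (meson gdist_le joined_edge)

lemma gd_self: "gdist E u u = 0"
  by (meson gdist_le joined_refl le_zero_eq)

lemma gd_zero: "gdist E u v = 0 \<Longrightarrow> u \<in> V \<Longrightarrow> v \<in> V \<Longrightarrow> u = v"
  using ex_joined[of u v] unfolding joined_def
  by (metis Suc_length_conv hd_Cons_tl last_ConsL length_0_conv list.sel(1))

lemma gd_adj: "E x y \<Longrightarrow> u \<in> V \<Longrightarrow> gdist E u y \<le> gdist E u x + 1"
  using gd_tri[of u x y] gd_edge[of x y] inV[of x y] by auto

lemma gd_step: assumes "u \<in> V" "v \<in> V" "gdist E u v = Suc k"
  shows "\<exists>x. E v x \<and> gdist E u x = k"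
proof -
  have "joined E v u (Suc k)" using ex_joined[OF assms(1,2)] assms(3) joined_sym sym by metis
  then obtain xs where xs: "walk E xs" "hd xs = v" "last xs = u" "length xs = Suc (Suc k)"
    unfolding joined_def by blast
  then obtain x ys where xs': "xs = v # x # ys" by (cases xs; cases "tl xs") auto
  have e: "E v x" and w: "walk E (x # ys)" using xs(1) xs' by auto
  have "joined E x u k" unfolding joined_def using w xs xs'
    by (intro exI[of _ "x # ys"]) auto
  then have "joined E u x k" using joined_sym sym by metis
  then have le: "gdist E u x \<le> k" by (rule gdist_le)
  have "Suc k \<le> gdist E u x + 1" using gd_adj[of x v u] e assms sym by metis
  then show ?thesis using le e by (intro exI[of _ x]) auto
qed

lemma ecc_ge: "u \<in> V \<Longrightarrow> v \<in> V \<Longrightarrow> gdist E u v \<le> ecc V E u"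
  unfolding ecc_def using fin by auto

lemma ecc_ge': "u \<in> V \<Longrightarrow> v \<in> V \<Longrightarrow> gdist E v u \<le> ecc V E u"
  using ecc_ge gd_sym by metis

lemma ecc_le_diam: "u \<in> V \<Longrightarrow> ecc V E u \<le> diameter V E"
  unfolding diameter_def using fin by auto

lemma diam_attained: "\<exists>u\<in>V. \<exists>w\<in>V. gdist E u w = diameter V E"
proof -
  obtain u where u: "u \<in> V" "ecc V E u = diameter V E"
    unfolding diameter_def using fin ne by (metis (no_types, lifting) Max_in finite_imageI imageE image_is_empty)
  obtain w where "w \<in> V" "ecc V E u = gdist E u w"
    unfolding ecc_def using fin ne by (metis (no_types, lifting) Max_in finite_imageI imageE image_is_empty)
  then show ?thesis using u by metis
qed

lemma fin_edges: "finite (edges V E)"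
proof -
  have "edges V E \<subseteq> (\<lambda>(u,v). {u,v}) ` (V \<times> V)" unfolding edges_def by auto
  then show ?thesis using fin finite_subset by blast
qed

end



context cgraph begin

lemma ecc_lb:
  assumes "u' \<in> V" "w' \<in> V" "gdist E u' w' = d" "x \<in> V" "2*c \<le> d+1"
  shows "c \<le> ecc V E x"
proof -
  have "d \<le> gdist E x u' + gdist E x w'" using gd_tri[of u' x w'] gd_sym[of u' x] assms by auto
  moreover have "gdist E x u' \<le> ecc V E x" "gdist E x w' \<le> ecc V E x" using ecc_ge assms by auto
  ultimately show ?thesis using assms(5) by linarith
qed

lemma one_side:
  assumes u': "u' \<in> V" and w': "w' \<in> V" and d: "gdist E u' w' = d" and v: "v \<in> V" "v \<noteq> u'"
    and lt: "gdist E u' v < gdist E w' v" and c: "2*c \<le> d+1"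
  shows "\<exists>p. E v p \<and> gdist E u' p < gdist E u' v \<and> c * (c+1) \<le> ecc V E v * ecc V E p"
proof -
  obtain k where k: "gdist E u' v = Suc k" using gd_zero[of u' v] u' v by (cases "gdist E u' v") auto
  obtain p where p: "E v p" "gdist E u' p = k" using gd_step[OF u' v(1) k] by blast
  have pV: "p \<in> V" using inV p by blast
  have "d \<le> gdist E u' p + gdist E p w'" using gd_tri[OF u' pV w'] d by simp
  moreover have "gdist E p w' \<le> ecc V E p" using ecc_ge pV w' by blast
  moreover have "gdist E w' v \<le> ecc V E v" using ecc_ge' v w' by blast
  moreover have "c \<le> ecc V E v" using ecc_lb[OF u' w' d v(1) c] .
  moreover have "c \<le> ecc V E p" using ecc_lb[OF u' w' d pV c] .
  ultimately have "(c+1 \<le> ecc V E v \<and> c \<le> ecc V E p) \<or> (c \<le> ecc V E v \<and> c+1 \<le> ecc V E p)"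
    using lt k p c by linarith
  then have "c * (c+1) \<le> ecc V E v * ecc V E p"
    by (metis mult.commute mult_le_mono)
  then show ?thesis using p k by auto
qed

end

locale dpath = cgraph +
  fixes u w :: 'a and xs :: "'a list" and d :: nat
  assumes uV: "u \<in> V" and wV: "w \<in> V" and duw: "gdist E u w = d" and diam: "diameter V E = d"
    and xs: "walk E xs" "hd xs = u" "last xs = w" "length xs = Suc d"
begin

lemma xs_V: "i \<le> d \<Longrightarrow> xs!i \<in> V"
proof -
  assume i: "i \<le> d"
  have st: "\<forall>i. Suc i < length xs \<longrightarrow> E (xs!i) (xs!Suc i)" using xs(1) walk_iff by metis
  show ?thesis
  proof (cases "i < d")
    case True then show ?thesis using st xs(4) inV by auto
  next
    case False
    show ?thesis
    proof (cases d)
      case 0 then show ?thesis using i xs uV by (metis hd_conv_nth le_zero_eq list.size(3) nat.distinct(1))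
    next
      case (Suc m) then have "E (xs!m) (xs!i)" using st xs(4) False i by (metis le_neq_implies_less lessI)
      then show ?thesis using inV by blast
    qed
  qed
qed

lemma pos: assumes "i \<le> d" shows "gdist E u (xs!i) = i" "gdist E (xs!i) w = d - i"
proof -
  have "joined E u (xs!i) i" unfolding joined_def using xs assms walk_take[OF xs(1), of i]
  proof (intro exI[of _ "take (Suc i) xs"] conjI)
    show "last (take (Suc i) xs) = xs ! i" using xs(4) assms by (simp add: take_Suc_conv_app_nth)
    show "hd (take (Suc i) xs) = u" using xs assms by (metis hd_take zero_less_Suc)
  qed (use xs assms walk_take[OF xs(1), of i] in auto)
  then have 1: "gdist E u (xs!i) \<le> i" by (rule gdist_le)
  have "joined E (xs!i) w (d - i)" unfolding joined_def using xs assms walk_drop[OF xs(1), of i]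
    by (intro exI[of _ "drop i xs"]) (auto simp: hd_drop_conv_nth)
  then have 2: "gdist E (xs!i) w \<le> d - i" by (rule gdist_le)
  have "d \<le> gdist E u (xs!i) + gdist E (xs!i) w" using gd_tri[OF uV xs_V[OF assms] wV] duw by simp
  then show "gdist E u (xs!i) = i" "gdist E (xs!i) w = d - i" using 1 2 assms by linarith+
qed

lemma xs_inj: "i \<le> d \<Longrightarrow> j \<le> d \<Longrightarrow> xs!i = xs!j \<Longrightarrow> i = j"
  using pos by metis

lemma set_xs: "set xs = (\<lambda>i. xs!i) ` {..d}"
  using xs(4) by (auto simp: set_conv_nth image_def less_Suc_eq_le)

lemma card_xs: "card (set xs) = Suc d"
proof -
  have "inj_on (\<lambda>i. xs!i) {..d}" using xs_inj by (auto simp: inj_on_def)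
  then show ?thesis using set_xs by (simp add: card_image)
qed

lemma setxs_V: "set xs \<subseteq> V" using set_xs xs_V by auto

definition claim where "claim v x \<longleftrightarrow> E v x \<and>
  ((gdist E u v \<le> gdist E w v \<and> gdist E u x < gdist E u v) \<or> (gdist E w v \<le> gdist E u v \<and> gdist E w x < gdist E w v))"

definition S where "S v = {{v,x} | x. claim v x}"

definition Pe where "Pe = (\<lambda>i. {xs!i, xs!Suc i}) ` {..<d}"

lemma claim_asym: "claim v x \<Longrightarrow> claim x v \<Longrightarrow> False"
  unfolding claim_def by linarith

lemma S_disj: "v \<noteq> v' \<Longrightarrow> S v \<inter> S v' = {}"
  unfolding S_def using claim_asym by (auto simp: doubleton_eq_iff)

lemma S_sub: "S v \<subseteq> edges V E"
  unfolding S_def edges_def claim_def using inV by blast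

lemma Pe_sub: "Pe \<subseteq> edges V E"
proof -
  have "E (xs!i) (xs!Suc i)" if "i < d" for i using xs walk_iff that by (metis Suc_mono)
  then show ?thesis unfolding Pe_def edges_def using inV by blast
qed

lemma Pe_S: "v \<notin> set xs \<Longrightarrow> Pe \<inter> S v = {}"
proof -
  assume v: "v \<notin> set xs"
  have "xs!i \<in> set xs" "xs!Suc i \<in> set xs" if "i < d" for i using that xs(4) by auto
  then show ?thesis unfolding Pe_def S_def using v by (auto simp: doubleton_eq_iff) 
qed

lemma w2: "a \<noteq> b \<Longrightarrow> (\<Prod>z\<in>{a,b}. ecc V E z) = ecc V E a * ecc V E b" by simp

lemma Pe_sum: "g2 d \<le> (\<Sum>e\<in>Pe. \<Prod>z\<in>e. ecc V E z)"
proof -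
  have inj: "inj_on (\<lambda>i. {xs!i, xs!Suc i}) {..<d}"
  proof (rule inj_onI)
    fix i j assume i: "i \<in> {..<d}" and j: "j \<in> {..<d}" and eq: "{xs!i, xs!Suc i} = {xs!j, xs!Suc j}"
    then have "(xs!i = xs!j \<and> xs!Suc i = xs!Suc j) \<or> (xs!i = xs!Suc j \<and> xs!Suc i = xs!j)"
      by (auto simp: doubleton_eq_iff)
    moreover have "i \<le> d" "j \<le> d" "Suc i \<le> d" "Suc j \<le> d" using i j by auto
    ultimately show "i = j"
    proof (elim disjE conjE)
      assume "xs!i = xs!j" then show "i = j" using xs_inj \<open>i \<le> d\<close> \<open>j \<le> d\<close> by blast
    next
      assume "xs!i = xs!Suc j" "xs!Suc i = xs!j"
      then have "i = Suc j" "Suc i = j" using xs_inj \<open>i \<le> d\<close> \<open>j \<le> d\<close> \<open>Suc i \<le> d\<close> \<open>Suc j \<le> d\<close> by blast+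
      then show "i = j" by simp
    qed
  qed
  have "(\<Sum>e\<in>Pe. \<Prod>z\<in>e. ecc V E z) = (\<Sum>i<d. \<Prod>z\<in>{xs!i, xs!Suc i}. ecc V E z)"
    unfolding Pe_def using inj by (simp add: sum.reindex)
  also have "\<dots> = (\<Sum>i<d. ecc V E (xs!i) * ecc V E (xs!Suc i))"
  proof (rule sum.cong)
    fix i assume "i \<in> {..<d}"
    then have "xs!i \<noteq> xs!Suc i" using xs_inj by (metis Suc_leI lessThan_iff less_imp_le_nat n_not_Suc_n)
    then show "(\<Prod>z\<in>{xs!i, xs!Suc i}. ecc V E z) = ecc V E (xs!i) * ecc V E (xs!Suc i)" by simp
  qed simp
  also have "\<dots> \<ge> g2 d" unfolding g2_def
  proof (rule sum_mono)
    fix i assume i: "i \<in> {..<d}"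
    have "i \<le> ecc V E (xs!i)" "d - i \<le> ecc V E (xs!i)"
      using pos[of i] i ecc_ge'[OF xs_V uV] ecc_ge[OF xs_V wV] by (metis lessThan_iff less_imp_le_nat)+
    then have a: "max i (d - i) \<le> ecc V E (xs!i)" by simp
    have "i+1 \<le> ecc V E (xs!Suc i)" "d - Suc i \<le> ecc V E (xs!Suc i)"
      using pos[of "Suc i"] i ecc_ge'[OF xs_V uV] ecc_ge[OF xs_V wV] by (metis Suc_leI lessThan_iff Suc_eq_plus1)+
    then have b: "max (i+1) (d - i - 1) \<le> ecc V E (xs!Suc i)" by simp
    show "max i (d - i) * max (i + 1) (d - i - 1) \<le> ecc V E (xs!i) * ecc V E (xs!Suc i)"
      using mult_le_mono[OF a b] .
  qed
  finally show ?thesis .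
qed

end



context dpath begin

abbreviation "cc \<equiv> (d+1) div 2"

lemma cc2: "2*cc \<le> d+1" "d \<le> 2*cc" by auto

lemma finS: "finite (S v)" using S_sub fin_edges finite_subset by blast

lemma sum_ge1: assumes "claim v p" shows "ecc V E v * ecc V E p \<le> (\<Sum>e\<in>S v. \<Prod>z\<in>e. ecc V E z)"
proof -
  have "{v,p} \<in> S v" using assms unfolding S_def by blast
  moreover have "v \<noteq> p" using assms irr unfolding claim_def by blast
  ultimately show ?thesis using member_le_sum[of "{v,p}" "S v" "\<lambda>e. \<Prod>z\<in>e. ecc V E z"] finS by simp
qed

lemma sum_ge2: assumes "claim v p" "claim v q" "p \<noteq> q"
  shows "ecc V E v * ecc V E p + ecc V E v * ecc V E q \<le> (\<Sum>e\<in>S v. \<Prod>z\<in>e. ecc V E z)"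
proof -
  have sub: "{{v,p},{v,q}} \<subseteq> S v" using assms unfolding S_def by blast
  have "v \<noteq> p" "v \<noteq> q" using assms irr unfolding claim_def by blast+
  moreover have "{v,p} \<noteq> {v,q}" using assms(3) by (auto simp: doubleton_eq_iff)
  ultimately have "(\<Sum>e\<in>{{v,p},{v,q}}. \<Prod>z\<in>e. ecc V E z) = ecc V E v * ecc V E p + ecc V E v * ecc V E q"
    by simp
  moreover have "(\<Sum>e\<in>{{v,p},{v,q}}. \<Prod>z\<in>e. ecc V E z) \<le> (\<Sum>e\<in>S v. \<Prod>z\<in>e. ecc V E z)"
    by (rule sum_mono2[OF finS sub]) simp
  ultimately show ?thesis by simp
qed

lemma S_sum: assumes v: "v \<in> V" "v \<notin> set xs"
  shows "cc * (cc+1) \<le> (\<Sum>e\<in>S v. \<Prod>z\<in>e. ecc V E z)"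
proof -
  have vu: "v \<noteq> u" and vw: "v \<noteq> w" using v xs by (metis hd_in_set last_in_set list.size(3) nat.distinct(1))+
  have dwu: "gdist E w u = d" using gd_sym uV wV duw by metis
  consider "gdist E u v < gdist E w v" | "gdist E w v < gdist E u v" | "gdist E u v = gdist E w v" by linarith
  then show ?thesis
  proof cases
    case 1
    obtain p where p: "E v p" "gdist E u p < gdist E u v" "cc * (cc+1) \<le> ecc V E v * ecc V E p"
      using one_side[OF uV wV duw v(1) vu 1 cc2(1)] by blast
    then have "claim v p" unfolding claim_def using 1 by auto
    then show ?thesis using sum_ge1 p by (meson le_trans)
  next
    case 2
    obtain p where p: "E v p" "gdist E w p < gdist E w v" "cc * (cc+1) \<le> ecc V E v * ecc V E p"
      using one_side[OF wV uV dwu v(1) vw 2 cc2(1)] by blast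
    then have "claim v p" unfolding claim_def using 2 by auto
    then show ?thesis using sum_ge1 p by (meson le_trans)
  next
    case 3
    have tri: "d \<le> gdist E u v + gdist E w v" using gd_tri[OF uV v(1) wV] gd_sym[OF v(1) wV] duw by simp
    obtain k where k: "gdist E u v = Suc k" using gd_zero[of u v] uV v vu by (cases "gdist E u v") auto
    obtain p where p: "E v p" "gdist E u p = k" using gd_step[OF uV v(1) k] by blast
    have cp: "claim v p" unfolding claim_def using 3 p k by auto
    have pV: "p \<in> V" using inV p by blast
    have ev: "gdist E u v \<le> ecc V E v" using ecc_ge' v uV by blast
    have ep: "cc \<le> ecc V E p" using ecc_lb[OF uV wV duw pV cc2(1)] .
    have evc: "cc \<le> ecc V E v" using ecc_lb[OF uV wV duw v(1) cc2(1)] .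
    show ?thesis
    proof (cases "cc + 1 \<le> gdist E u v")
      case True
      then have "cc * (cc+1) \<le> ecc V E v * ecc V E p" using ev ep
        by (metis le_trans mult.commute mult_le_mono)
      then show ?thesis using sum_ge1[OF cp] by linarith
    next
      case False
      have k2: "gdist E w v = Suc k" using 3 k by simp
      obtain q where q: "E v q" "gdist E w q = k" using gd_step[OF wV v(1) k2] by blast
      have cq: "claim v q" unfolding claim_def using 3 q k by auto
      have qV: "q \<in> V" using inV q by blast
      have "d \<le> gdist E u q + gdist E q w" using gd_tri[OF uV qV wV] duw by simp
      then have "gdist E u q \<noteq> gdist E u p" using q p k False tri cc2 gd_sym[OF qV wV] by linarith
      then have pq: "p \<noteq> q" by blast
      have eq: "cc \<le> ecc V E q" using ecc_lb[OF uV wV duw qV cc2(1)] .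
      have "cc * cc \<le> ecc V E v * ecc V E p" "cc * cc \<le> ecc V E v * ecc V E q"
        using evc ep eq mult_le_mono by blast+
      moreover have "cc * (cc+1) \<le> cc * cc + cc * cc" by (simp add: le_square)
      ultimately show ?thesis using sum_ge2[OF cp cq pq] by linarith
    qed
  qed
qed

lemma lower: "g2 d + (card V - 1 - d) * cc * (cc + 1) \<le> sigma2 V E"
proof -
  let ?f = "\<lambda>e. \<Prod>z\<in>e. ecc V E z"
  let ?N = "V - set xs"
  have finN: "finite ?N" using fin by blast
  have cardN: "card ?N = card V - 1 - d" using card_xs setxs_V fin by (simp add: card_Diff_subset)
  have disj: "\<forall>i\<in>?N. \<forall>j\<in>?N. i \<noteq> j \<longrightarrow> S i \<inter> S j = {}" using S_disj by blast
  have U: "(\<Sum>e\<in>(\<Union>v\<in>?N. S v). ?f e) = (\<Sum>v\<in>?N. \<Sum>e\<in>S v. ?f e)"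
    by (rule sum.UNION_disjoint[OF finN _ disj]) (simp add: finS)
  have PU: "Pe \<inter> (\<Union>v\<in>?N. S v) = {}" using Pe_S by blast
  have finPe: "finite Pe" unfolding Pe_def by simp
  have finU: "finite (\<Union>v\<in>?N. S v)" using finN finS by blast
  have "Pe \<union> (\<Union>v\<in>?N. S v) \<subseteq> edges V E" using Pe_sub S_sub by blast
  then have "(\<Sum>e\<in>Pe \<union> (\<Union>v\<in>?N. S v). ?f e) \<le> sigma2 V E"
    unfolding sigma2_def by (intro sum_mono2[OF fin_edges]) auto
  moreover have "(\<Sum>e\<in>Pe \<union> (\<Union>v\<in>?N. S v). ?f e) = (\<Sum>e\<in>Pe. ?f e) + (\<Sum>v\<in>?N. \<Sum>e\<in>S v. ?f e)"
    using sum.union_disjoint[OF finPe finU PU, of ?f] U by simp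
  moreover have "(\<Sum>v\<in>?N. cc * (cc+1)) \<le> (\<Sum>v\<in>?N. \<Sum>e\<in>S v. ?f e)"
    by (rule sum_mono) (use S_sum in auto)
  moreover have "(\<Sum>v\<in>?N. cc * (cc+1)) = (card V - 1 - d) * cc * (cc + 1)" by (simp only: sum_constant cardN mult.assoc of_nat_id)
  ultimately show ?thesis using Pe_sum by linarith
qed

end

lemma (in cgraph) lower_bound:
  assumes "diameter V E = d"
  shows "g2 d + (card V - 1 - d) * ((d+1) div 2) * ((d+1) div 2 + 1) \<le> sigma2 V E"
proof -
  obtain u w where uw: "u \<in> V" "w \<in> V" "gdist E u w = d" using diam_attained assms by metis
  obtain xs where xs: "walk E xs" "hd xs = u" "last xs = w" "length xs = Suc d"
    using ex_joined[OF uw(1,2)] uw(3) unfolding joined_def by metis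
  interpret dpath V E u w xs d using uw xs assms by unfold_locales auto
  show ?thesis using lower .
qed




lemma ceil_half: "nat \<lceil>real d / 2\<rceil> = (d+1) div 2"
proof -
  obtain m where m: "d = 2*m \<or> d = 2*m+1" by (metis oddE evenE)
  then show ?thesis
  proof
    assume d: "d = 2*m"
    then have "real d / 2 = real m" by simp
    moreover have "(d+1) div 2 = m" using d by simp
    ultimately show ?thesis by simp
  next
    assume d: "d = 2*m+1"
    have "\<lceil>real d / 2\<rceil> = int m + 1"
      by (rule ceiling_unique) (simp_all add: d)
    moreover have "(d+1) div 2 = m + 1" using d by simp
    ultimately show ?thesis by simp
  qed
qed

locale xtree =
  fixes n d :: nat
  assumes d1: "1 \<le> d" and dn: "d < n" and d2: "2 \<le> d \<or> n = d + 1"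
begin

abbreviation "T \<equiv> ext_tree_edge n d"
abbreviation "h \<equiv> d div 2"

definition pos where "pos x = (if x \<le> d then x else h)"
definition lf :: "nat \<Rightarrow> nat" where "lf x = (if x \<le> d then 0 else 1)"
definition f where "f x y = (if x = y then 0 else (max (pos x) (pos y) - min (pos x) (pos y)) + lf x + lf y)"

lemma Tsym: "\<forall>a b. T a b \<longrightarrow> T b a" unfolding ext_tree_edge_def by auto

lemma f_lip: assumes "T a b" shows "f x b \<le> f x a + 1"
proof -
  consider "a \<le> d" "b = Suc a" "b \<le> d" | "b \<le> d" "a = Suc b" "a \<le> d" | "a = h" "d < b" | "b = h" "d < a"
    using assms unfolding ext_tree_edge_def by auto
  then show ?thesis
  proof cases
    case 1 then show ?thesis unfolding f_def pos_def lf_def by (auto simp: max_def min_def split: if_splits)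
  next
    case 2 then show ?thesis unfolding f_def pos_def lf_def by (auto simp: max_def min_def split: if_splits)
  next
    case 3 then show ?thesis unfolding f_def pos_def lf_def by (auto simp: max_def min_def split: if_splits)
  next
    case 4 then show ?thesis unfolding f_def pos_def lf_def by (auto simp: max_def min_def split: if_splits)
  qed
qed

lemma path_joined: "i \<le> j \<Longrightarrow> j \<le> d \<Longrightarrow> joined T i j (j - i)"
proof (induction j)
  case 0 then show ?case using joined_refl by simp
next
  case (Suc j)
  show ?case
  proof (cases "i = Suc j")
    case True then show ?thesis using joined_refl by simp
  next
    case False
    then have a: "joined T i j (j - i)" using Suc by auto
    have b: "T j (Suc j)" unfolding ext_tree_edge_def using Suc dn by auto
    have "joined T i (Suc j) (j - i + 1)" using joined_trans[OF a joined_edge[of T j "Suc j", OF b]] .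
    then show ?thesis using False Suc by (simp add: Suc_diff_le)
  qed
qed

lemma path_joined': "i \<le> d \<Longrightarrow> j \<le> d \<Longrightarrow> joined T i j (max i j - min i j)"
proof (cases "i \<le> j")
  case True
  assume "i \<le> d" "j \<le> d"
  then show ?thesis using path_joined[of i j] True by (simp add: max_def min_def)
next
  case False
  assume "i \<le> d" "j \<le> d"
  then have "joined T j i (i - j)" using path_joined[of j i] False by simp
  then have "joined T i j (i - j)" by (rule joined_sym[OF Tsym])
  then show ?thesis using False by (simp add: max_def min_def)
qed

lemma to_h: "x < n \<Longrightarrow> joined T x h (max (pos x) h - min (pos x) h + lf x)"
proof (cases "x \<le> d")
  case True
  have "h \<le> d" by simp
  then have "joined T x h (max x h - min x h)" using path_joined'[of x h] True by blast
  then show ?thesis using True unfolding pos_def lf_def by simp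
next
  case False
  assume "x < n"
  have "h < n" using dn by linarith
  then have "T x h" unfolding ext_tree_edge_def using False \<open>x < n\<close> by simp
  then have "joined T x h 1" by (rule joined_edge)
  then show ?thesis using False unfolding pos_def lf_def by simp
qed

lemma f_joined: assumes "x < n" "y < n" shows "joined T x y (f x y)"
proof (cases "x = y")
  case True then show ?thesis unfolding f_def using joined_refl by simp
next
  case False
  have fxy: "f x y = max (pos x) (pos y) - min (pos x) (pos y) + lf x + lf y" using False by (simp add: f_def)
  show ?thesis
  proof (cases "x \<le> d \<and> y \<le> d")
    case True
    then have "pos x = x" "pos y = y" "lf x = 0" "lf y = 0" unfolding pos_def lf_def by auto
    then show ?thesis using path_joined'[of x y] True fxy by simp
  next
    case nb: False
    have a: "joined T x h (max (pos x) h - min (pos x) h + lf x)" using to_h assms(1) .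
    have b: "joined T h y (max (pos y) h - min (pos y) h + lf y)" using joined_sym[OF Tsym to_h[OF assms(2)]] .
    have c: "joined T x y (max (pos x) h - min (pos x) h + lf x + (max (pos y) h - min (pos y) h + lf y))"
      using joined_trans[OF a b] .
    have "max (pos x) h - min (pos x) h + lf x + (max (pos y) h - min (pos y) h + lf y) = f x y"
    proof (cases "x \<le> d")
      case True
      then have "\<not> y \<le> d" using nb by blast
      then have "pos y = h" "lf y = 1" "pos x = x" "lf x = 0" using True unfolding pos_def lf_def by auto
      then show ?thesis using fxy by (simp add: max_def min_def)
    next
      case xf: False
      show ?thesis
      proof (cases "y \<le> d")
        case True
        then have "pos x = h" "lf x = 1" "pos y = y" "lf y = 0" using xf unfolding pos_def lf_def by auto
        then show ?thesis using fxy by (simp add: max_def min_def)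
      next
        case False
        then have "pos x = h" "lf x = 1" "pos y = h" "lf y = 1" using xf unfolding pos_def lf_def by auto
        then show ?thesis using fxy by simp
      qed
    qed
    then show ?thesis using c by metis
  qed
qed

lemma gd: assumes "x < n" "y < n" shows "gdist T x y = f x y"
proof -
  have "f x y \<le> k" if "joined T x y k" for k
    using gdist_lower[of T "f x", OF f_lip that] unfolding f_def by simp
  then show ?thesis unfolding gdist_def using f_joined[OF assms]
    by (intro Least_equality) auto
qed

lemma ecc_f: "x < n \<Longrightarrow> ecc {0..<n} T x = Max (f x ` {0..<n})"
  unfolding ecc_def using gd by (metis (no_types, lifting) atLeastLessThan_iff image_cong)

lemma ecc_path: assumes "x \<le> d" shows "ecc {0..<n} T x = max x (d - x)"
proof -
  have "Max (f x ` {0..<n}) = max x (d - x)"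
  proof (rule Max_eqI)
    fix m assume "m \<in> f x ` {0..<n}"
    then obtain y where y: "y < n" "m = f x y" by auto
    have hh: "2*h \<le> d" "d \<le> 2*h+1" by auto
    show "m \<le> max x (d - x)"
    proof (cases "x = y")
      case True then show ?thesis using y unfolding f_def by simp
    next
      case False
      show ?thesis
      proof (cases "y \<le> d")
        case True
        then have "m = max x y - min x y" using y False assms unfolding f_def pos_def lf_def by simp
        then show ?thesis using True assms by (auto simp: max_def min_def split: if_splits)
      next
        case yl: False
        then have "2 \<le> d" using d2 y by auto
        have "m = max x h - min x h + 1" using y False assms yl unfolding f_def pos_def lf_def by simp
        moreover have "max x k - min x k + 1 \<le> max x (d - x)" if "2*k \<le> d" "d \<le> 2*k+1" for k
          using that assms \<open>2 \<le> d\<close> by (auto simp: max_def min_def)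
        ultimately show ?thesis using hh by simp
      qed
    qed
  next
    show "max x (d - x) \<in> f x ` {0..<n}"
    proof (cases "x \<le> d - x")
      case True
      then have "f x d = d - x" using assms unfolding f_def pos_def lf_def by auto
      then show ?thesis using True dn by (metis atLeastLessThan_iff image_eqI max_def zero_le)
    next
      case False
      then have "f x 0 = x" using assms unfolding f_def pos_def lf_def by auto
      then show ?thesis using False dn by (metis atLeastLessThan_iff image_eqI max_def zero_le le0 le_less_trans)
    qed
  qed auto
  then show ?thesis using ecc_f assms dn by simp
qed

lemma ecc_leaf: assumes "d < x" "x < n" shows "ecc {0..<n} T x = d - h + 1"
proof -
  have "Max (f x ` {0..<n}) = d - h + 1"
  proof (rule Max_eqI)
    fix m assume "m \<in> f x ` {0..<n}"
    then obtain y where y: "y < n" "m = f x y" by auto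
    have hh: "2*h \<le> d" "d \<le> 2*h+1" by auto
    show "m \<le> d - h + 1"
    proof (cases "x = y")
      case True then show ?thesis using y unfolding f_def by simp
    next
      case False
      show ?thesis
      proof (cases "y \<le> d")
        case True
        then have "m = max h y - min h y + 1" using y False assms unfolding f_def pos_def lf_def by simp
        then show ?thesis using True hh by (auto simp: max_def min_def split: if_splits)
      next
        case yl: False
        have "m = 2" using y False assms yl unfolding f_def pos_def lf_def by simp
        then show ?thesis using hh d1 by simp
      qed
    qed
  next
    have "f x d = d - h + 1" using assms unfolding f_def pos_def lf_def by auto
    then show "d - h + 1 \<in> f x ` {0..<n}" using dn by (metis atLeastLessThan_iff image_eqI zero_le)
  qed auto
  then show ?thesis using ecc_f assms by simp
qed

lemma edges_T: "edges {0..<n} T = (\<lambda>i. {i, Suc i}) ` {..<d} \<union> (\<lambda>l. {h, l}) ` {d<..<n}"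
proof
  show "edges {0..<n} T \<subseteq> (\<lambda>i. {i, Suc i}) ` {..<d} \<union> (\<lambda>l. {h, l}) ` {d<..<n}"
  proof
    fix e assume "e \<in> edges {0..<n} T"
    then obtain a b where e: "e = {a,b}" "T a b" unfolding edges_def by blast
    then consider "a < d" "b = Suc a" | "b < d" "a = Suc b" | "a = h" "d < b" "b < n" | "b = h" "d < a" "a < n"
      unfolding ext_tree_edge_def by auto
    then show "e \<in> (\<lambda>i. {i, Suc i}) ` {..<d} \<union> (\<lambda>l. {h, l}) ` {d<..<n}"
    proof cases
      case 1 then show ?thesis using e by auto
    next
      case 2 then have "e = {b, Suc b}" using e by auto
      then show ?thesis using 2 by auto
    next
      case 3 then show ?thesis using e by auto
    next
      case 4 then have "e = {h, a}" using e by auto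
      then show ?thesis using 4 by auto
    qed
  qed
next
  show "(\<lambda>i. {i, Suc i}) ` {..<d} \<union> (\<lambda>l. {h, l}) ` {d<..<n} \<subseteq> edges {0..<n} T"
  proof
    fix e assume "e \<in> (\<lambda>i. {i, Suc i}) ` {..<d} \<union> (\<lambda>l. {h, l}) ` {d<..<n}"
    then consider i where "i < d" "e = {i, Suc i}" | l where "d < l" "l < n" "e = {h, l}" by auto
    then show "e \<in> edges {0..<n} T"
    proof cases
      case 1 then have "T i (Suc i)" unfolding ext_tree_edge_def using dn by auto
      moreover have "i < n" "Suc i < n" using 1 dn by auto
      ultimately have "i \<in> {0..<n} \<and> Suc i \<in> {0..<n} \<and> T i (Suc i)" by auto
      then show ?thesis unfolding edges_def using 1 by blast
    next
      case 2 then have "T h l" unfolding ext_tree_edge_def using dn by auto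
      moreover have "h < n" using dn by linarith
      ultimately have "h \<in> {0..<n} \<and> l \<in> {0..<n} \<and> T h l" using 2 by auto
      then show ?thesis unfolding edges_def using 2 by blast
    qed
  qed
qed

lemma sigma_T: "sigma2 {0..<n} T = g2 d + (n - 1 - d) * ((d+1) div 2) * ((d+1) div 2 + 1)"
proof -
  let ?g = "\<lambda>e. \<Prod>z\<in>e. ecc {0..<n} T z"
  let ?A = "(\<lambda>i. {i, Suc i}) ` {..<d}" and ?B = "(\<lambda>l. {h, l}) ` {d<..<n}"
  have disj: "?A \<inter> ?B = {}" by (auto simp: doubleton_eq_iff)
  have injA: "inj_on (\<lambda>i. {i, Suc i}) {..<d}" by (auto simp: inj_on_def doubleton_eq_iff)
  have injB: "inj_on (\<lambda>l. {h, l}) {d<..<n}" by (auto simp: inj_on_def doubleton_eq_iff)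
  have "sigma2 {0..<n} T = sum ?g ?A + sum ?g ?B"
    unfolding sigma2_def edges_T by (rule sum.union_disjoint) (use disj in auto)
  also have "sum ?g ?A = (\<Sum>i<d. ?g {i, Suc i})" using injA by (simp add: sum.reindex)
  also have "\<dots> = g2 d" unfolding g2_def
  proof (rule sum.cong)
    fix i assume "i \<in> {..<d}"
    then show "?g {i, Suc i} = max i (d - i) * max (i + 1) (d - i - 1)"
      using ecc_path[of i] ecc_path[of "Suc i"] by simp
  qed simp
  also have "sum ?g ?B = (\<Sum>l\<in>{d<..<n}. ?g {h, l})" using injB by (simp add: sum.reindex)
  also have "\<dots> = (\<Sum>l\<in>{d<..<n}. (d - h) * (d - h + 1))"
  proof (rule sum.cong)
    fix l assume l: "l \<in> {d<..<n}"
    then have "h \<noteq> l" by auto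
    moreover have "ecc {0..<n} T h = d - h" using ecc_path[of h] by simp
    ultimately show "?g {h, l} = (d - h) * (d - h + 1)" using ecc_leaf l by simp
  qed simp
  also have "\<dots> = (n - 1 - d) * ((d+1) div 2) * ((d+1) div 2 + 1)"
  proof -
    have dh: "d - h = (d+1) div 2" by simp
    have "(\<Sum>l\<in>{d<..<n}. (d - h) * (d - h + 1)) = card {d<..<n} * ((d - h) * (d - h + 1))"
      by (simp only: sum_constant of_nat_id)
    also have "card {d<..<n} = n - 1 - d" by simp
    finally show ?thesis unfolding dh by (simp only: mult.assoc)
  qed
  finally show ?thesis .
qed

end


theorem corollary3p3:
  fixes V :: "'a set" and E :: "'a \<Rightarrow> 'a \<Rightarrow> bool" and n d :: nat
  assumes "connected_graph V E" and "card V = n" and "diameter V E = d"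
    and "1 \<le> d" and "d < n"
  shows "sigma2 V E \<ge> g2 d + (n - 1 - d) * nat \<lceil>real d / 2\<rceil> * (nat \<lceil>real d / 2\<rceil> + 1)
    \<and> ((2 \<le> d \<or> n = d + 1) \<longrightarrow>
         sigma2 {0..<n} (ext_tree_edge n d)
           = g2 d + (n - 1 - d) * nat \<lceil>real d / 2\<rceil> * (nat \<lceil>real d / 2\<rceil> + 1))"
proof
  interpret cgraph V E using assms(1) by unfold_locales
  show "sigma2 V E \<ge> g2 d + (n - 1 - d) * nat \<lceil>real d / 2\<rceil> * (nat \<lceil>real d / 2\<rceil> + 1)"
    using lower_bound[OF assms(3)] assms(2) unfolding ceil_half by simp
  show "(2 \<le> d \<or> n = d + 1) \<longrightarrow>
         sigma2 {0..<n} (ext_tree_edge n d)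
           = g2 d + (n - 1 - d) * nat \<lceil>real d / 2\<rceil> * (nat \<lceil>real d / 2\<rceil> + 1)"
  proof
    assume "2 \<le> d \<or> n = d + 1"
    then interpret xtree n d using assms(4,5) by unfold_locales auto
    show "sigma2 {0..<n} (ext_tree_edge n d)
           = g2 d + (n - 1 - d) * nat \<lceil>real d / 2\<rceil> * (nat \<lceil>real d / 2\<rceil> + 1)"
      unfolding ceil_half by (rule sigma_T)
  qed
qed

end
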